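(* Let $K, C\subset\mathbb{R}^n$ be closed, let $\mathcal{P}\subset\partial K\cap\partial C$ be a set such that property (Pr) holds, and let $F:\mathbb{R}^n\rightrightarrows\mathbb{R}^n$ be a continuous set-valued map such that $F(x)\subset T_K(x)$ for all $x\in\partial K\cap\operatorname{int}(C)$. Then, for all $x\in\mathcal{P}$, $F(x)\subset T_K(x)$ and $T^a_{\partial K}(x)=T_{\partial K}(x)$.
   Context: Property (Pr): the map $T_K:\partial K\rightrightarrows\mathbb{R}^n$, $x\mapsto T_K(x)$, is continuous (upper and lower semicontinuous) at every point of $\mathcal{P}$, and for every $x\in\mathcal{P}$ and every neighborhood $\mathcal{N}(x)$ of $x$, $\mathcal{N}(x)\cap\partial K\cap\operatorname{int}(C)\neq\emptyset$. Contingent cone of a set $S$ at $x\in\operatorname{cl}(S)$: $T_S(x)=\{v: \exists t_i\to 0^+, \exists v_i\to v,\ x+t_iv_i\in S\}$. Adjacent cone: $T^a_S(x)=\{v: \forall t_i\to 0^+, \exists v_i\to v,\ x+t_iv_i\in S\}$. *)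

theory Defs
  imports "HOL-Analysis.Analysis"
begin

definition contingent_cone :: "'a::real_normed_vector set \<Rightarrow> 'a \<Rightarrow> 'a set" where
  "contingent_cone S x = {v. \<exists>t::nat \<Rightarrow> real. \<exists>w::nat \<Rightarrow> 'a.
      (\<forall>i. t i > 0) \<and> t \<longlonglongrightarrow> 0 \<and> w \<longlonglongrightarrow> v \<and> (\<forall>i. x + t i *\<^sub>R w i \<in> S)}"

definition adjacent_cone :: "'a::real_normed_vector set \<Rightarrow> 'a \<Rightarrow> 'a set" where
  "adjacent_cone S x = {v. \<forall>t::nat \<Rightarrow> real. ((\<forall>i. t i > 0) \<and> t \<longlonglongrightarrow> 0) \<longrightarrow>
      (\<exists>w::nat \<Rightarrow> 'a. w \<longlonglongrightarrow> v \<and> (\<forall>i. x + t i *\<^sub>R w i \<in> S))}"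

definition usc_at :: "'a::metric_space set \<Rightarrow> ('a \<Rightarrow> 'b::topological_space set) \<Rightarrow> 'a \<Rightarrow> bool" where
  "usc_at D F x \<longleftrightarrow> (\<forall>U. open U \<and> F x \<subseteq> U \<longrightarrow>
      (\<exists>e>0. \<forall>y\<in>D. dist y x < e \<longrightarrow> F y \<subseteq> U))"

definition lsc_at :: "'a::metric_space set \<Rightarrow> ('a \<Rightarrow> 'b::topological_space set) \<Rightarrow> 'a \<Rightarrow> bool" where
  "lsc_at D F x \<longleftrightarrow> (\<forall>V. open V \<and> F x \<inter> V \<noteq> {} \<longrightarrow>
      (\<exists>e>0. \<forall>y\<in>D. dist y x < e \<longrightarrow> F y \<inter> V \<noteq> {}))"

definition property_Pr :: "'a::euclidean_space set \<Rightarrow> 'a set \<Rightarrow> 'a set \<Rightarrow> bool" where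
  "property_Pr K C P \<longleftrightarrow> (\<forall>x\<in>P.
      usc_at (frontier K) (contingent_cone K) x \<and> lsc_at (frontier K) (contingent_cone K) x \<and>
      (\<forall>N. open N \<and> x \<in> N \<longrightarrow> N \<inter> frontier K \<inter> interior C \<noteq> {}))"

end

theory Submission
  imports Defs
begin



lemma cc_iff:
  fixes S :: "'a::real_normed_vector set"
  shows "v \<in> contingent_cone S x \<longleftrightarrow>
    (\<forall>e>0. \<forall>d>0. \<exists>t w. 0<t \<and> t<d \<and> dist w v < e \<and> x + t *\<^sub>R w \<in> S)"
proof
  assume "v \<in> contingent_cone S x"
  then obtain t w where tw: "\<forall>i. t i > 0" "t \<longlonglongrightarrow> 0" "w \<longlonglongrightarrow> v" "\<forall>i. x + t i *\<^sub>R w i \<in> S"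
    unfolding contingent_cone_def by blast
  show "\<forall>e>0. \<forall>d>0. \<exists>t w. 0<t \<and> t<d \<and> dist w v < e \<and> x + t *\<^sub>R w \<in> S"
  proof (intro allI impI)
    fix e d :: real assume "e>0" "d>0"
    obtain N1 where N1: "\<forall>n\<ge>N1. dist (t n) 0 < d" using tw(2) \<open>d>0\<close> unfolding lim_sequentially by blast
    obtain N2 where N2: "\<forall>n\<ge>N2. dist (w n) v < e" using tw(3) \<open>e>0\<close> unfolding lim_sequentially by blast
    let ?n = "max N1 N2"
    have "0 < t ?n \<and> t ?n < d \<and> dist (w ?n) v < e \<and> x + t ?n *\<^sub>R w ?n \<in> S"
      using N1[rule_format, of ?n] N2[rule_format, of ?n] tw(1,4) by auto
    then show "\<exists>t w. 0<t \<and> t<d \<and> dist w v < e \<and> x + t *\<^sub>R w \<in> S" by blast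
  qed
next
  assume H: "\<forall>e>0. \<forall>d>0. \<exists>t w. 0<t \<and> t<d \<and> dist w v < e \<and> x + t *\<^sub>R w \<in> S"
  have "\<forall>n::nat. \<exists>t w. 0<t \<and> t< 1/(Suc n) \<and> dist w v < 1/(Suc n) \<and> x + t *\<^sub>R w \<in> S"
    using H by simp
  then obtain T W where TW: "\<And>n. 0 < T n \<and> T n < 1/(Suc n) \<and> dist (W n) v < 1/(Suc n) \<and> x + T n *\<^sub>R W n \<in> S"
    by metis
  have small: "\<exists>N. \<forall>n\<ge>N. 1/real (Suc n) < r" if "r>0" for r::real
  proof -
    obtain N where "inverse (real (Suc N)) < r" using reals_Archimedean \<open>r>0\<close> by blast
    then have "\<forall>n\<ge>N. 1/real (Suc n) < r"
      by (smt (verit, ccfv_SIG) Suc_le_mono divide_inverse frac_le inverse_eq_divide le_SucI mult_1 of_nat_0_less_iff of_nat_le_iff zero_less_Suc)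
    then show ?thesis by blast
  qed
  have "T \<longlonglongrightarrow> 0" unfolding lim_sequentially
  proof (intro allI impI)
    fix r :: real assume "r>0" then obtain N where "\<forall>n\<ge>N. 1/real (Suc n) < r" using small by blast
    then show "\<exists>no. \<forall>n\<ge>no. dist (T n) 0 < r" using TW by (metis dist_real_def abs_of_pos diff_zero less_trans)
  qed
  moreover have "W \<longlonglongrightarrow> v" unfolding lim_sequentially
  proof (intro allI impI)
    fix r :: real assume "r>0" then obtain N where "\<forall>n\<ge>N. 1/real (Suc n) < r" using small by blast
    then show "\<exists>no. \<forall>n\<ge>no. dist (W n) v < r" using TW by (meson less_trans)
  qed
  ultimately show "v \<in> contingent_cone S x" unfolding contingent_cone_def using TW by blast
qed

lemma cc_closed:
  fixes S :: "'a::real_normed_vector set"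
  shows "closed (contingent_cone S x)"
proof -
  have "v \<in> contingent_cone S x" if "v \<in> closure (contingent_cone S x)" for v
  proof -
    have "\<exists>t w. 0<t \<and> t<d \<and> dist w v < e \<and> x + t *\<^sub>R w \<in> S" if "e>0" "d>0" for e d
    proof -
      have e2: "e/2 > 0" using \<open>e>0\<close> by simp
      obtain u where u: "u \<in> contingent_cone S x" "dist u v < e/2"
        using \<open>v \<in> closure _\<close> e2 unfolding closure_approachable by blast
      have "\<forall>e>0. \<forall>d>0. \<exists>t w. 0<t \<and> t<d \<and> dist w u < e \<and> x + t *\<^sub>R w \<in> S"
        using u(1) unfolding cc_iff .
      then obtain t w where "0<t" "t<d" "dist w u < e/2" "x + t *\<^sub>R w \<in> S"
        using e2 \<open>d>0\<close> by blast
      moreover have "dist w v < e" using u(2) \<open>dist w u < e/2\<close> dist_triangle[of w v u] by linarith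
      ultimately show ?thesis by blast
    qed
    then show ?thesis unfolding cc_iff by blast
  qed
  then show ?thesis using closure_subset_eq by blast
qed

lemma cc_cone:
  fixes S :: "'a::real_normed_vector set"
  assumes "c \<in> contingent_cone S x" "s > 0"
  shows "s *\<^sub>R c \<in> contingent_cone S x"
  unfolding cc_iff
proof (intro allI impI)
  fix e d :: real assume "e>0" "d>0"
  have "\<forall>e>0. \<forall>d>0. \<exists>t w. 0<t \<and> t<d \<and> dist w c < e \<and> x + t *\<^sub>R w \<in> S"
    using assms(1) unfolding cc_iff .
  moreover have "e / s > 0" "d * s > 0" using \<open>e>0\<close> \<open>d>0\<close> assms(2) by simp_all
  ultimately obtain t w where tw: "0 < t" "t < d * s" "dist w c < e / s" "x + t *\<^sub>R w \<in> S"
    by blast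
  have "t/s < d" using tw(2) \<open>s>0\<close> by (simp add: divide_less_eq mult.commute)
  moreover have "dist (s *\<^sub>R w) (s *\<^sub>R c) < e"
  proof -
    have "dist (s *\<^sub>R w) (s *\<^sub>R c) = s * dist w c"
    proof -
      have "s *\<^sub>R w - s *\<^sub>R c = s *\<^sub>R (w - c)" by (simp add: algebra_simps)
      then show ?thesis using \<open>s>0\<close> by (simp add: dist_norm)
    qed
    also have "\<dots> < e" using tw(3) \<open>s>0\<close> by (simp add: less_divide_eq mult.commute)
    finally show ?thesis .
  qed
  moreover have "x + (t/s) *\<^sub>R (s *\<^sub>R w) \<in> S" using tw(4) \<open>s>0\<close> by simp
  moreover have "0 < t/s" using tw(1) \<open>s>0\<close> by simp
  ultimately show "\<exists>t w. 0<t \<and> t<d \<and> dist w (s *\<^sub>R c) < e \<and> x + t *\<^sub>R w \<in> S" by blast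
qed

lemma cc_mono: "S \<subseteq> S' \<Longrightarrow> contingent_cone S x \<subseteq> contingent_cone S' x"
  unfolding contingent_cone_def by blast

lemma adj_sub: "adjacent_cone S x \<subseteq> contingent_cone S x"
proof
  fix v assume "v \<in> adjacent_cone S x"
  moreover have "(\<forall>i. inverse (real (Suc i)) > 0) \<and> (\<lambda>i. inverse (real (Suc i))) \<longlonglongrightarrow> 0"
    using LIMSEQ_inverse_real_of_nat by simp
  moreover have H: "\<forall>t. ((\<forall>i. t i > 0) \<and> t \<longlonglongrightarrow> 0) \<longrightarrow> (\<exists>w. w \<longlonglongrightarrow> v \<and> (\<forall>i. x + t i *\<^sub>R w i \<in> S))"
    using \<open>v \<in> adjacent_cone S x\<close> unfolding adjacent_cone_def by blast
  ultimately have "\<exists>w. w \<longlonglongrightarrow> v \<and> (\<forall>i. x + inverse (real (Suc i)) *\<^sub>R w i \<in> S)"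
    using spec[OF H, of "\<lambda>i. inverse (real (Suc i))"] \<open>(\<forall>i. inverse (real (Suc i)) > 0) \<and> _\<close> by blast
  then show "v \<in> contingent_cone S x" unfolding contingent_cone_def mem_Collect_eq
    apply (intro exI[of _ "\<lambda>i. inverse (real (Suc i))"])
    using \<open>(\<forall>i. inverse (real (Suc i)) > 0) \<and> _\<close> by blast
qed

lemma usc_sub:
  fixes K :: "'a::real_normed_vector set"
  assumes "usc_at D (contingent_cone K) x"
  shows "\<exists>e>0. \<forall>y\<in>D. dist y x < e \<longrightarrow> contingent_cone K y \<subseteq> contingent_cone K x"
proof -
  define C where "C = contingent_cone K x"
  define U where "U = (\<Union>c\<in>C. ball c 1)"
  have "open U" unfolding U_def by auto
  moreover have "C \<subseteq> U" unfolding U_def by force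
  ultimately obtain e where e: "e>0" "\<forall>y\<in>D. dist y x < e \<longrightarrow> contingent_cone K y \<subseteq> U"
    using assms unfolding usc_at_def C_def by blast
  have "contingent_cone K y \<subseteq> C" if "y \<in> D" "dist y x < e" for y
  proof
    fix c assume c: "c \<in> contingent_cone K y"
    have "c \<in> closure C" unfolding closure_approachable
    proof (intro allI impI)
      fix r :: real assume "r > 0"
      define s where "s = 2 / r"
      have "s > 0" using \<open>r>0\<close> by (simp add: s_def)
      have "s *\<^sub>R c \<in> U" using cc_cone[OF c \<open>s>0\<close>] e that by blast
      then obtain z where z: "z \<in> C" "dist z (s *\<^sub>R c) < 1" unfolding U_def by auto
      have "(1/s) *\<^sub>R z \<in> C" using cc_cone[of z K x "1/s"] z(1) \<open>s>0\<close> by (simp add: C_def)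
      moreover have "dist ((1/s) *\<^sub>R z) c < r"
      proof -
        have "dist ((1/s) *\<^sub>R z) c = (1/s) * dist z (s *\<^sub>R c)"
        proof -
          have "(1/s) *\<^sub>R z - c = (1/s) *\<^sub>R (z - s *\<^sub>R c)" using \<open>s>0\<close> by (simp add: algebra_simps)
          then show ?thesis using \<open>s>0\<close> by (simp add: dist_norm)
        qed
        also have "\<dots> < 1/s" using z(2) \<open>s>0\<close> by (simp add: divide_strict_right_mono)
        also have "\<dots> \<le> r" using \<open>r>0\<close> by (simp add: s_def)
        finally show ?thesis .
      qed
      ultimately show "\<exists>y\<in>C. dist y c < r" by blast
    qed
    then show "c \<in> C" using cc_closed closure_closed unfolding C_def by metis
  qed
  then show ?thesis using e(1) unfolding C_def by blast
qed

lemma dini_mono: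
  fixes g :: "real \<Rightarrow> real"
  assumes "a \<le> b" "continuous_on {a..b} g" "L < M"
   and H: "\<And>s. a \<le> s \<Longrightarrow> s < b \<Longrightarrow> g s \<le> g a + M*(s-a) \<Longrightarrow>
        \<forall>\<eta>>0. \<exists>h. 0<h \<and> h<\<eta> \<and> s+h \<le> b \<and> g (s+h) \<le> g s + L*h"
  shows "g b \<le> g a + M*(b-a)"
proof -
  define S where "S = {s \<in> {a..b}. g s \<le> g a + M*(s-a)}"
  have "continuous_on {a..b} (\<lambda>s. g a + M*(s-a))" by (intro continuous_intros)
  then have "closed S" unfolding S_def
    using continuous_on_closed_Collect_le[OF assms(2)] closed_atLeastAtMost by blast
  have "a \<in> S" using assms(1) by (simp add: S_def)
  have "bdd_above S" unfolding S_def by (rule bdd_aboveI[of _ b]) auto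
  define s0 where "s0 = Sup S"
  have s0S: "s0 \<in> S" unfolding s0_def using closed_contains_Sup \<open>closed S\<close> \<open>a\<in>S\<close> \<open>bdd_above S\<close> by blast
  have "s0 = b"
  proof (rule ccontr)
    assume "s0 \<noteq> b"
    then have "s0 < b" "a \<le> s0" "g s0 \<le> g a + M*(s0-a)" using s0S by (auto simp: S_def)
    then obtain h where h: "0<h" "s0+h \<le> b" "g (s0+h) \<le> g s0 + L*h" using H[of s0] by (meson zero_less_one)
    have "L*h \<le> M*h" using h(1) \<open>L<M\<close> by simp
    have "M*((s0+h)-a) = M*(s0-a) + M*h" by (simp add: algebra_simps)
    then have "g (s0+h) \<le> g a + M*((s0+h)-a)" using h(3) \<open>L*h \<le> M*h\<close> \<open>g s0 \<le> _\<close> by linarith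
    then have "s0 + h \<in> S" using h \<open>a \<le> s0\<close> by (auto simp: S_def)
    then have "s0 + h \<le> s0" unfolding s0_def using cSup_upper \<open>bdd_above S\<close> by blast
    then show False using h(1) by simp
  qed
  then show ?thesis using s0S by (simp add: S_def)
qed

lemma proximal:
  fixes K :: "'a::euclidean_space set"
  assumes "p \<in> K" "\<forall>y\<in>K. dist q p \<le> dist q y"
    "\<forall>e>0. \<forall>d>0. \<exists>t w. 0<t \<and> t<d \<and> dist w c < e \<and> p + t *\<^sub>R w \<in> K"
  shows "inner c (q - p) \<le> 0"
proof (rule ccontr)
  assume "\<not> inner c (q - p) \<le> 0"
  then have a: "inner c (q - p) > 0" by simp
  define \<alpha> where "\<alpha> = inner c (q - p)"
  define e where "e = min 1 (\<alpha> / (2 * (norm (q - p) + 1)))"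
  define d where "d = \<alpha> / (norm c + 1)^2"
  have "norm c + 1 > 0" "norm (q - p) + 1 > 0" by (simp_all add: add_nonneg_pos)
  then have "e > 0" "d > 0" using a by (auto simp: e_def d_def \<alpha>_def intro!: divide_pos_pos)
  then obtain t w where tw: "0<t" "t<d" "dist w c < e" "p + t *\<^sub>R w \<in> K" using assms(3) by blast
  have nw: "norm w \<le> norm c + 1" using tw(3) norm_triangle_ineq2[of w c] by (simp add: dist_norm e_def)
  have "\<bar>inner (w - c) (q - p)\<bar> \<le> norm (w - c) * norm (q - p)" by (rule Cauchy_Schwarz_ineq2)
  also have "\<dots> \<le> e * norm (q - p)" using tw(3) by (simp add: dist_norm mult_right_mono)
  also have "\<dots> \<le> \<alpha> / (2 * (norm (q - p) + 1)) * norm (q - p)"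
    by (rule mult_right_mono) (auto simp: e_def)
  also have "\<dots> \<le> \<alpha> / 2"
  proof -
    have "norm (q-p) + 1 > 0" by (simp add: add_nonneg_pos)
    then have "norm (q - p) / (norm (q-p) + 1) \<le> 1" by (simp add: divide_le_eq)
    then have "\<alpha> * (norm (q - p) / (norm (q-p) + 1)) \<le> \<alpha> * 1"
      using a unfolding \<alpha>_def by (intro mult_left_mono) auto
    moreover have "\<alpha> / (2 * (norm (q - p) + 1)) * norm (q - p) = (\<alpha> * (norm (q - p) / (norm (q-p) + 1))) / 2"
      by simp
    ultimately show ?thesis by (metis divide_right_mono mult_1_right zero_le_numeral)
  qed
  finally have ab: "\<bar>inner (w - c) (q - p)\<bar> \<le> \<alpha> / 2" .
  have iw: "inner w (q - p) \<ge> \<alpha>/2"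
    using ab abs_ge_minus_self[of "inner (w - c) (q - p)"] unfolding inner_diff_left \<alpha>_def by linarith
  have "t * (norm w)^2 \<le> t * (norm c + 1)^2" using nw tw(1) by (simp add: power_mono)
  also have "\<dots> < d * (norm c + 1)^2" using tw(2) \<open>norm c + 1 > 0\<close> by (intro mult_strict_right_mono) auto
  also have "\<dots> = \<alpha>" using \<open>norm c + 1 > 0\<close> by (simp add: d_def)
  finally have tw2: "t * (norm w)^2 < \<alpha>" .
  have "(dist q (p + t *\<^sub>R w))^2 = (norm (q - p))^2 - 2 * t * inner w (q - p) + t^2 * (norm w)^2"
    by (simp add: dist_norm power2_norm_eq_inner inner_diff_left inner_diff_right inner_add_left inner_add_right inner_commute algebra_simps power2_eq_square[of t])
  also have "\<dots> < (norm (q - p))^2"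
  proof -
    have "t^2 * (norm w)^2 < t * \<alpha>" using tw2 tw(1) by (simp add: power2_eq_square)
    moreover have "2 * t * inner w (q - p) \<ge> t * \<alpha>" using iw tw(1) by (simp add: field_simps)
    ultimately show ?thesis by linarith
  qed
  finally have "(dist q (p + t *\<^sub>R w))^2 < (dist q p)^2" by (simp add: dist_norm)
  then have "dist q (p + t *\<^sub>R w) < dist q p" using power2_less_imp_less zero_le_dist by blast
  then show False using assms(2) tw(4) by force
qed


lemma lsc_unif:
  fixes K :: "'a::euclidean_space set"
  assumes "lsc_at D (contingent_cone K) x" "compact S" "S \<subseteq> contingent_cone K x" "\<epsilon>>0"
  shows "\<exists>\<delta>>0. \<forall>p\<in>D. dist p x < \<delta> \<longrightarrow> (\<forall>u\<in>S. \<exists>c\<in>contingent_cone K p. dist c u < \<epsilon>)"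
proof -
  have "\<forall>u\<in>S. \<exists>d>0. \<forall>p\<in>D. dist p x < d \<longrightarrow> contingent_cone K p \<inter> ball u (\<epsilon>/2) \<noteq> {}"
  proof
    fix u assume "u \<in> S"
    then have "contingent_cone K x \<inter> ball u (\<epsilon>/2) \<noteq> {}" using assms(3,4) by force
    then show "\<exists>d>0. \<forall>p\<in>D. dist p x < d \<longrightarrow> contingent_cone K p \<inter> ball u (\<epsilon>/2) \<noteq> {}"
      using assms(1) unfolding lsc_at_def by (meson open_ball)
  qed
  then obtain df where df: "\<And>u. u \<in> S \<Longrightarrow> df u > 0 \<and> (\<forall>p\<in>D. dist p x < df u \<longrightarrow> contingent_cone K p \<inter> ball u (\<epsilon>/2) \<noteq> {})"
    by metis
  have "S \<subseteq> (\<Union>u\<in>S. ball u (\<epsilon>/2))" using assms(4) by force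
  then obtain F where F: "F \<subseteq> S" "finite F" "S \<subseteq> (\<Union>u\<in>F. ball u (\<epsilon>/2))"
    using compactE_image[OF assms(2), of S "\<lambda>u. ball u (\<epsilon>/2)"] by blast
  define \<delta> where "\<delta> = Min (insert 1 (df ` F))"
  have "\<delta> > 0" unfolding \<delta>_def using F df by (subst Min_gr_iff) auto
  moreover have "\<forall>p\<in>D. dist p x < \<delta> \<longrightarrow> (\<forall>u\<in>S. \<exists>c\<in>contingent_cone K p. dist c u < \<epsilon>)"
  proof (intro ballI impI)
    fix p u assume p: "p \<in> D" "dist p x < \<delta>" and u: "u \<in> S"
    then obtain u0 where u0: "u0 \<in> F" "dist u0 u < \<epsilon>/2" using F(3) by force
    have "\<delta> \<le> df u0" unfolding \<delta>_def using u0(1) F(2) by simp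
    then obtain c where c: "c \<in> contingent_cone K p" "dist u0 c < \<epsilon>/2"
      using df[of u0] u0(1) F(1) p by force
    have "dist c u < \<epsilon>" using c(2) u0(2) dist_triangle[of c u u0] by (simp add: dist_commute)
    then show "\<exists>c\<in>contingent_cone K p. dist c u < \<epsilon>" using c(1) by blast
  qed
  ultimately show ?thesis by blast
qed



lemma nearest_frontier:
  fixes K :: "'a::euclidean_space set"
  assumes "closed K" "z \<notin> K" "p \<in> K" "\<forall>y\<in>K. dist z p \<le> dist z y"
  shows "p \<in> frontier K"
proof -
  have "p \<notin> interior K"
  proof
    assume "p \<in> interior K"
    then obtain e where e: "e>0" "ball p e \<subseteq> K" using open_contains_ball interior_subset
      by (meson mem_interior)
    have \<rho>: "dist z p > 0" using assms(2,3) by auto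
    define s where "s = min (1/2) (e / (2 * dist z p))"
    have s: "0 < s" "s < 1" using e(1) \<rho> by (auto simp: s_def)
    define y where "y = p + s *\<^sub>R (z - p)"
    have "dist p y = s * dist z p" using s by (simp add: y_def dist_norm dist_commute)
    also have "\<dots> \<le> e/2" using \<rho> by (simp add: s_def min_def field_simps split: if_splits)
    also have "\<dots> < e" using e by simp
    finally have "y \<in> K" using e(2) by auto
    have "z - y = (1 - s) *\<^sub>R (z - p)" by (simp add: y_def algebra_simps)
    then have "dist z y = (1 - s) * dist z p" using s by (simp add: dist_norm)
    also have "\<dots> < dist z p" using s \<rho> by simp
    finally show False using assms(4) \<open>y \<in> K\<close> by force
  qed
  then show ?thesis using assms(1,3) by (simp add: frontier_def)
qed

lemma prox_claim:
  fixes K :: "'a::euclidean_space set"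
  assumes "z \<notin> K" "p \<in> K" "\<forall>y\<in>K. dist z p \<le> dist z y" "r > 0"
    and U: "\<forall>u\<in>sphere v r. \<exists>c\<in>contingent_cone K p. dist c u < r/2"
  shows "inner v (z - p) \<le> -(r/2) * dist z p"
proof -
  define \<rho> where "\<rho> = dist z p"
  have \<rho>: "\<rho> > 0" using assms(1,2) by (auto simp: \<rho>_def)
  define n where "n = (1/\<rho>) *\<^sub>R (z - p)"
  have nn: "norm n = 1" using \<rho> by (simp add: n_def \<rho>_def dist_norm)
  define u where "u = v + r *\<^sub>R n"
  have "u \<in> sphere v r" using nn assms(4) by (simp add: u_def dist_norm)
  then obtain c where c: "c \<in> contingent_cone K p" "dist c u < r/2" using U by blast
  have "inner c (z - p) \<le> 0"
    using proximal[OF assms(2,3)] c(1) unfolding cc_iff by blast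
  then have cn: "inner c n \<le> 0" using \<rho> by (simp add: n_def divide_nonpos_pos)
  have "inner u n = inner v n + r" using nn by (simp add: u_def inner_add_left power2_norm_eq_inner[symmetric])
  moreover have "inner (u - c) n \<le> norm (u - c)" using Cauchy_Schwarz_ineq2[of "u - c" n] nn by simp
  moreover have "norm (u - c) < r/2" using c(2) by (simp add: dist_norm norm_minus_commute)
  ultimately have "inner v n < - r/2" using cn by (simp add: inner_diff_left)
  then have "\<rho> * inner v n \<le> \<rho> * (-r/2)" using \<rho> by (intro mult_left_mono) auto
  moreover have "\<rho> * inner v n = inner v (z - p)" using \<rho> by (simp add: n_def)
  ultimately show ?thesis by (simp add: \<rho>_def mult.commute)
qed



lemma not_int:
  fixes K :: "'a::euclidean_space set"
  assumes K: "closed K" and x: "x \<in> frontier K" and lsc: "lsc_at (frontier K) (contingent_cone K) x"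
    and v: "v \<in> contingent_cone (frontier K) x"
  shows "v \<notin> interior (contingent_cone K x)"
proof
  assume "v \<in> interior (contingent_cone K x)"
  then obtain e where e: "e>0" "ball v e \<subseteq> contingent_cone K x" unfolding mem_interior by blast
  define r where "r = e/2"
  have r: "r > 0" using e by (simp add: r_def)
  have sph: "sphere v r \<subseteq> contingent_cone K x" using e(2) e(1) by (auto simp: r_def)
  have r2: "r/2 > 0" using r by simp
  obtain \<delta> where \<delta>: "\<delta>>0" "\<forall>p\<in>frontier K. dist p x < \<delta> \<longrightarrow> (\<forall>u\<in>sphere v r. \<exists>c\<in>contingent_cone K p. dist c u < r/2)"
    using lsc_unif[OF lsc compact_sphere sph r2] by blast
  have xK: "x \<in> K" using x K frontier_subset_closed by blast
  have KNE: "K \<noteq> {}" using xK by blast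
  have PC: "inner v (z - p) \<le> -(r/2) * dist z p"
    if "z \<notin> K" "p \<in> K" "dist z p = infdist z K" "dist z x < \<delta>/2" for z p
  proof -
    have near: "\<forall>y\<in>K. dist z p \<le> dist z y" using that(3) infdist_le by metis
    have pf: "p \<in> frontier K" using nearest_frontier[OF K that(1,2) near] .
    have "dist z p \<le> dist z x" using near xK by blast
    then have "dist p x < \<delta>" using dist_triangle[of p x z] that(4) by (simp add: dist_commute)
    then show ?thesis using prox_claim[OF that(1,2) near r] \<delta>(2) pf by blast
  qed
  define d' where "d' = \<delta> / (4*norm v + r + 1)"
  have den: "4*norm v + r + 1 > 0" using r by (simp add: add_nonneg_pos)
  have "d' > 0" using \<delta>(1) den by (simp add: d'_def)
  have r16: "r/16 > 0" using r by simp
  have "\<forall>e>0. \<forall>d>0. \<exists>t w. 0<t \<and> t<d \<and> dist w v < e \<and> x + t *\<^sub>R w \<in> frontier K"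
    using v unfolding cc_iff .
  then obtain t w where tw: "0<t" "t<d'" "dist w v < r/16" "x + t *\<^sub>R w \<in> frontier K"
    using r16 \<open>d'>0\<close> by blast
  define b where "b = x + t *\<^sub>R w"
  have "b \<in> closure (-K)" using tw(4) by (simp add: frontier_closures b_def)
  moreover have "t*r/16 > 0" using tw(1) r by simp
  ultimately obtain q where q: "q \<in> -K" "dist q b < t*r/16" unfolding closure_approachable
    by (metis dist_commute)
  define \<psi> where "\<psi> = (\<lambda>s. infdist (q - s *\<^sub>R v) K)"
  have \<psi>0: "\<psi> 0 > 0" using infdist_pos_not_in_closed[OF K KNE] q(1) by (simp add: \<psi>_def)
  have lip: "\<psi> s \<le> \<psi> (s+h) + h * norm v" if "h \<ge> 0" for s h
  proof -
    have "dist (q - s *\<^sub>R v) (q - (s+h) *\<^sub>R v) = h * norm v"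
      using that by (simp add: dist_norm algebra_simps)
    then show ?thesis using infdist_triangle[of "q - s *\<^sub>R v" K "q - (s+h) *\<^sub>R v"] by (simp add: \<psi>_def)
  qed
  have cont: "continuous_on {0..t} (\<lambda>s. - \<psi> s)" unfolding \<psi>_def by (intro continuous_intros)
  have nw: "norm w \<le> norm v + r/16" using tw(3) norm_triangle_ineq2[of w v] by (simp add: dist_norm)
  have dist_zx: "dist (q - s *\<^sub>R v) x < \<delta>/2" if "0 \<le> s" "s \<le> t" for s
  proof -
    have "q - s *\<^sub>R v - x = (q - b) + t *\<^sub>R w - s *\<^sub>R v" by (simp add: b_def)
    then have "dist (q - s *\<^sub>R v) x = norm ((q - b) + t *\<^sub>R w - s *\<^sub>R v)" by (simp only: dist_norm)
    moreover have "norm ((q - b) + t *\<^sub>R w - s *\<^sub>R v) \<le> norm ((q - b) + t *\<^sub>R w) + norm (s *\<^sub>R v)"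
      by (rule norm_triangle_ineq4)
    moreover have "norm ((q - b) + t *\<^sub>R w) \<le> norm (q - b) + norm (t *\<^sub>R w)"
      by (rule norm_triangle_ineq)
    ultimately have "dist (q - s *\<^sub>R v) x \<le> norm (q - b) + norm (t *\<^sub>R w) + norm (s *\<^sub>R v)"
      by linarith
    also have "\<dots> \<le> t*r/16 + t * (norm v + r/16) + t * norm v"
    proof -
      have "norm (q - b) \<le> t*r/16" using q(2) by (simp add: dist_norm)
      moreover have "norm (t *\<^sub>R w) \<le> t * (norm v + r/16)" using nw tw(1) by (simp add: mult_left_mono)
      moreover have "norm (s *\<^sub>R v) \<le> t * norm v" using that by (simp add: mult_right_mono)
      ultimately show ?thesis by linarith
    qed
    also have "\<dots> = t * (2 * norm v + r/8)" by (simp add: algebra_simps)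
    also have "\<dots> \<le> t * ((4*norm v + r + 1)/2)" using tw(1) r by (intro mult_left_mono) auto
    also have "\<dots> < d' * ((4*norm v + r + 1)/2)" using tw(2) den by (intro mult_strict_right_mono) auto
    also have "\<dots> = \<delta>/2" using den by (simp add: d'_def)
    finally show ?thesis .
  qed
  have main: "- \<psi> t \<le> - \<psi> 0 + (-r/8) * (t - 0)"
  proof (rule dini_mono[where L = "-r/4"])
    show "0 \<le> t" using tw(1) by simp
    show "continuous_on {0..t} (\<lambda>s. - \<psi> s)" by (rule cont)
    show "-r/4 < -r/8" using r by simp
    fix s assume s: "0 \<le> s" "s < t" "- \<psi> s \<le> - \<psi> 0 + (-r/8) * (s - 0)"
    have "r * s / 8 \<ge> 0" using r s by simp
    then have \<psi>s: "\<psi> s > 0" using s(3) \<psi>0 by simp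
    show "\<forall>\<eta>>0. \<exists>h. 0<h \<and> h<\<eta> \<and> s+h \<le> t \<and> - \<psi> (s+h) \<le> - \<psi> s + (-r/4) * h"
    proof (intro allI impI)
      fix \<eta> :: real assume "\<eta> > 0"
      define h where "h = min (\<eta>/2) (min (t - s) (min (\<psi> s / (2*(norm v + 1)))
            (min (r * \<psi> s / (4*((norm v)^2 + 1))) (\<psi> s / (r + 1)))))"
      have nv1: "norm v + 1 > 0" "(norm v)^2 + 1 > 0" "r + 1 > 0" using r by (simp_all add: add_nonneg_pos)
      have h0: "h > 0" using \<open>\<eta>>0\<close> s \<psi>s r nv1 by (simp add: h_def)
      have "h \<le> \<eta>/2" "h \<le> t - s" unfolding h_def by (rule min.cobounded1, simp)
      then have h1: "h < \<eta>" "s + h \<le> t" using \<open>\<eta>>0\<close> by linarith+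
      have h2: "h * (2*(norm v + 1)) \<le> \<psi> s"
      proof -
        have "h \<le> \<psi> s / (2*(norm v + 1))" by (simp add: h_def)
        then show ?thesis using nv1 by (simp add: le_divide_eq)
      qed
      have h3: "h * (4*((norm v)^2 + 1)) \<le> r * \<psi> s"
      proof -
        have "h \<le> r * \<psi> s / (4*((norm v)^2 + 1))" by (simp add: h_def)
        then show ?thesis using nv1 by (simp add: le_divide_eq)
      qed
      have h4: "h * (r + 1) \<le> \<psi> s"
      proof -
        have "h \<le> \<psi> s / (r + 1)" by (simp add: h_def)
        then show ?thesis using nv1 by (simp add: le_divide_eq)
      qed
      define z' where "z' = q - (s+h) *\<^sub>R v"
      define \<rho> where "\<rho> = \<psi> (s+h)"
      have "\<psi> s \<le> \<rho> + h * norm v" using lip[of h s] h0 by (simp add: \<rho>_def)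
      moreover have "h * norm v \<le> \<psi> s / 2" using h2 h0 by (simp add: algebra_simps)
      ultimately have \<rho>2: "\<psi> s \<le> 2 * \<rho>" by linarith
      then have \<rho>0: "\<rho> > 0" using \<psi>s by simp
      have z'K: "z' \<notin> K" using \<rho>0 by (auto simp: \<rho>_def \<psi>_def z'_def)
      obtain p' where p': "p' \<in> K" "infdist z' K = dist z' p'"
        using infdist_attains_inf[OF K KNE] by blast
      have \<rho>d: "\<rho> = dist z' p'" using p'(2) by (simp add: \<rho>_def \<psi>_def z'_def)
      have ip: "inner v (z' - p') \<le> -(r/2) * \<rho>"
        using PC[OF z'K p'(1) p'(2)[symmetric]] dist_zx[of "s+h"] s h0 h1 \<rho>d by (simp add: z'_def)
      have zz: "q - s *\<^sub>R v = z' + h *\<^sub>R v" by (simp add: z'_def algebra_simps)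
      have "\<psi> s \<le> dist (z' + h *\<^sub>R v) p'" using infdist_le[OF p'(1)] zz by (simp add: \<psi>_def)
      moreover have "(dist (z' + h *\<^sub>R v) p')^2 \<le> (\<rho> - r*h/4)^2"
      proof -
        have "(dist (z' + h *\<^sub>R v) p')^2 = \<rho>^2 + 2*h*inner v (z' - p') + h^2 * (norm v)^2"
          unfolding \<rho>d
          by (simp add: dist_norm power2_norm_eq_inner inner_diff_left inner_diff_right inner_add_left
              inner_add_right inner_commute algebra_simps power2_eq_square[of h])
        also have "\<dots> \<le> \<rho>^2 - h * r * \<rho> + h^2 * (norm v)^2"
        proof -
          have "2*h*inner v (z' - p') \<le> 2*h*(-(r/2) * \<rho>)" using ip h0 by (intro mult_left_mono) auto
          then show ?thesis by (simp add: algebra_simps)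
        qed
        also have "\<dots> \<le> (\<rho> - r*h/4)^2"
        proof -
          have "r * \<psi> s \<le> r * (2 * \<rho>)" using r \<rho>2 by (intro mult_left_mono) auto
          then have A0: "h * (4*((norm v)^2 + 1)) \<le> r * (2 * \<rho>)" using h3 by linarith
          have "h * (4*((norm v)^2 + 1)) = 4*(h * (norm v)^2) + 4*h" by (simp add: algebra_simps)
          moreover have "r * (2 * \<rho>) = 2 * (r * \<rho>)" by simp
          ultimately have A: "h * (norm v)^2 \<le> (r * \<rho>) / 2" using A0 h0 by linarith
          have "h^2 * (norm v)^2 = h * (h * (norm v)^2)" by (simp add: power2_eq_square)
          also have "\<dots> \<le> h * ((r * \<rho>) / 2)" using A h0 by (intro mult_left_mono) auto
          also have "\<dots> = h * r * \<rho> / 2" by simp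
          finally have B: "h^2 * (norm v)^2 \<le> h * r * \<rho> / 2" .
          have C: "(\<rho> - r*h/4)^2 = \<rho>^2 - h * r * \<rho> / 2 + (r*h/4)^2"
            by (simp add: power2_diff algebra_simps)
          have "(r*h/4)^2 \<ge> 0" by simp
          then show ?thesis using B C by linarith
        qed
        finally show ?thesis .
      qed
      moreover have "\<rho> - r*h/4 \<ge> 0"
      proof -
        have "r*h \<le> h * (r + 1)" using h0 by (simp add: algebra_simps)
        then show ?thesis using h4 \<rho>2 \<rho>0 by linarith
      qed
      ultimately have "\<psi> s \<le> \<rho> - r*h/4" using power2_le_imp_le order_trans by blast
      then show "\<exists>h. 0<h \<and> h<\<eta> \<and> s+h \<le> t \<and> - \<psi> (s+h) \<le> - \<psi> s + (-r/4) * h"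
        using h0 h1 by (intro exI[of _ h]) (simp add: \<rho>_def)
    qed
  qed
  have "\<psi> t \<le> dist (q - t *\<^sub>R v) x" using infdist_le[OF xK] by (simp add: \<psi>_def)
  also have "\<dots> \<le> norm (q - b) + norm (t *\<^sub>R (w - v))"
  proof -
    have "q - t *\<^sub>R v - x = (q - b) + t *\<^sub>R (w - v)" by (simp add: b_def algebra_simps)
    then have "dist (q - t *\<^sub>R v) x = norm ((q - b) + t *\<^sub>R (w - v))" by (simp only: dist_norm)
    then show ?thesis using norm_triangle_ineq[of "q - b" "t *\<^sub>R (w - v)"] by linarith
  qed
  also have "\<dots> < t*r/16 + t*r/16"
  proof -
    have "norm (q - b) < t*r/16" using q(2) by (simp add: dist_norm)
    moreover have "norm (t *\<^sub>R (w - v)) < t*r/16" using tw(1,3) by (simp add: dist_norm)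
    ultimately show ?thesis by linarith
  qed
  finally have "\<psi> t < t*r/8" by (simp add: mult.commute)
  moreover have "\<psi> t \<ge> \<psi> 0 + r*t/8" using main by simp
  ultimately show False using \<psi>0 by (simp add: mult.commute)
qed



lemma key:
  fixes K :: "'a::euclidean_space set"
  assumes K: "closed K" and x: "x \<in> frontier K" and usc: "usc_at (frontier K) (contingent_cone K) x"
    and lsc: "lsc_at (frontier K) (contingent_cone K) x"
    and v: "v \<in> contingent_cone (frontier K) x" and "\<epsilon> > 0"
  shows "\<exists>\<delta>>0. \<forall>p\<in>frontier K. dist p x < \<delta> \<longrightarrow>
           (\<forall>\<eta>>0. \<exists>h u. 0<h \<and> h<\<eta> \<and> dist u v < \<epsilon> \<and> p + h *\<^sub>R u \<in> frontier K)"
proof -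
  define Tx where "Tx = contingent_cone K x"
  have "frontier K \<subseteq> K" using K by (rule frontier_subset_closed)
  then have vT: "v \<in> Tx" using v cc_mono unfolding Tx_def by blast
  have "v \<notin> interior Tx" using not_int[OF K x lsc v] by (simp add: Tx_def)
  then have "v \<in> closure (- Tx)" by (simp add: closure_complement)
  moreover have e2: "\<epsilon>/2 > 0" using \<open>\<epsilon>>0\<close> by simp
  ultimately have "\<exists>y\<in>- Tx. dist y v < \<epsilon>/2" unfolding closure_approachable by blast
  then obtain c' where c': "c' \<notin> Tx" "dist c' v < \<epsilon>/2" by blast
  obtain e1 where e1: "e1 > 0" "\<forall>y\<in>frontier K. dist y x < e1 \<longrightarrow> contingent_cone K y \<subseteq> Tx"
    using usc_sub[OF usc] unfolding Tx_def by blast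
  have "open (ball v (\<epsilon>/2))" "contingent_cone K x \<inter> ball v (\<epsilon>/2) \<noteq> {}" using vT e2 by (auto simp: Tx_def)
  then obtain e3 where e3: "e3 > 0" "\<forall>y\<in>frontier K. dist y x < e3 \<longrightarrow> contingent_cone K y \<inter> ball v (\<epsilon>/2) \<noteq> {}"
    using lsc unfolding lsc_at_def by blast
  define \<delta> where "\<delta> = min e1 e3"
  have "\<delta> > 0" using e1 e3 by (simp add: \<delta>_def)
  moreover have "\<forall>p\<in>frontier K. dist p x < \<delta> \<longrightarrow>
           (\<forall>\<eta>>0. \<exists>h u. 0<h \<and> h<\<eta> \<and> dist u v < \<epsilon> \<and> p + h *\<^sub>R u \<in> frontier K)"
  proof (intro ballI impI allI)
    fix p \<eta> :: 'a assume p: "p \<in> frontier K" "dist p x < \<delta>"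
    show "\<eta> > 0 \<Longrightarrow> \<exists>h u. 0<h \<and> h<\<eta> \<and> dist u v < \<epsilon> \<and> p + h *\<^sub>R u \<in> frontier K" for \<eta> :: real
    proof -
      assume "\<eta> > 0"
      have "contingent_cone K p \<inter> ball v (\<epsilon> / 2) \<noteq> {}" using e3 p by (auto simp: \<delta>_def)
      then obtain c where c: "c \<in> contingent_cone K p" "dist v c < \<epsilon>/2" by auto
      have "c' \<notin> contingent_cone K p" using c'(1) e1 p by (auto simp: \<delta>_def)
      then obtain ee dd where eedd: "ee > 0" "dd > 0"
        "\<forall>t w. 0<t \<and> t<dd \<and> dist w c' < ee \<longrightarrow> p + t *\<^sub>R w \<notin> K"
        unfolding cc_iff by blast
      have "min \<eta> dd > 0" using \<open>\<eta>>0\<close> eedd by simp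
      moreover have "\<forall>e>0. \<forall>d>0. \<exists>t w. 0<t \<and> t<d \<and> dist w c < e \<and> p + t *\<^sub>R w \<in> K"
        using c(1) unfolding cc_iff .
      ultimately obtain t w where tw: "0 < t" "t < min \<eta> dd" "dist w c < \<epsilon>/2" "p + t *\<^sub>R w \<in> K"
        using e2 by blast
      have "p + t *\<^sub>R c' \<notin> K" using eedd(3)[rule_format, of t c'] eedd(1) tw(1,2) by simp
      define \<gamma> where "\<gamma> = (\<lambda>l::real. p + t *\<^sub>R ((1 - l) *\<^sub>R w + l *\<^sub>R c'))"
      have "connected (\<gamma> ` {0..1})" unfolding \<gamma>_def
        by (intro connected_continuous_image connected_Icc continuous_intros)
      moreover have "\<gamma> 0 \<in> \<gamma> ` {0..1}" by simp
      then have "\<gamma> ` {0..1} \<inter> K \<noteq> {}" using tw(4) unfolding \<gamma>_def by auto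
      moreover have "\<gamma> 1 \<in> \<gamma> ` {0..1}" by simp
      then have "\<gamma> ` {0..1} - K \<noteq> {}" using \<open>p + t *\<^sub>R c' \<notin> K\<close> unfolding \<gamma>_def by auto
      ultimately have "\<gamma> ` {0..1} \<inter> frontier K \<noteq> {}" by (rule connected_Int_frontier)
      then obtain l where l: "l \<in> {0..1}" "\<gamma> l \<in> frontier K" by blast
      define u where "u = (1 - l) *\<^sub>R w + l *\<^sub>R c'"
      have "w \<in> ball v \<epsilon>" using tw(3) c(2) dist_triangle[of v w c] by (simp add: dist_commute)
      moreover have "dist c' v < \<epsilon>" using c'(2) zero_le_dist[of c' v] by linarith
      then have "c' \<in> ball v \<epsilon>" by (simp add: dist_commute)
      ultimately have "u \<in> ball v \<epsilon>" unfolding u_def using l(1)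
        by (intro convexD[OF convex_ball]) auto
      then have "dist u v < \<epsilon>" by (simp add: dist_commute)
      moreover have "p + t *\<^sub>R u \<in> frontier K" using l(2) by (simp add: \<gamma>_def u_def)
      moreover have "t < \<eta>" using tw(2) by simp
      ultimately show ?thesis using tw(1) by blast
    qed
  qed
  ultimately show ?thesis by blast
qed



lemma adj_eq:
  fixes K :: "'a::euclidean_space set"
  assumes K: "closed K" and x: "x \<in> frontier K" and usc: "usc_at (frontier K) (contingent_cone K) x"
    and lsc: "lsc_at (frontier K) (contingent_cone K) x"
  shows "adjacent_cone (frontier K) x = contingent_cone (frontier K) x"
proof
  show "adjacent_cone (frontier K) x \<subseteq> contingent_cone (frontier K) x" by (rule adj_sub)
  show "contingent_cone (frontier K) x \<subseteq> adjacent_cone (frontier K) x"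
  proof
    fix v assume v: "v \<in> contingent_cone (frontier K) x"
    define F where "F = frontier K"
    have Fc: "closed F" by (simp add: F_def)
    have xF: "x \<in> F" using x by (simp add: F_def)
    have FNE: "F \<noteq> {}" using xF by blast
    have est: "\<exists>\<tau>>0. \<forall>s. 0 < s \<and> s < \<tau> \<longrightarrow> infdist (x + s *\<^sub>R v) F \<le> \<epsilon> * s" if eps: "\<epsilon> > 0" for \<epsilon>
    proof -
      have "\<epsilon>/2 > 0" using eps by simp
      from key[OF K x usc lsc v this] obtain \<delta> where \<delta>: "\<delta> > 0"
        "\<forall>p\<in>F. dist p x < \<delta> \<longrightarrow> (\<forall>\<eta>>0. \<exists>h u. 0<h \<and> h<\<eta> \<and> dist u v < \<epsilon>/2 \<and> p + h *\<^sub>R u \<in> F)"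
        unfolding F_def by blast
      define \<tau> where "\<tau> = \<delta> / (2 * norm v + 1)"
      have den: "2 * norm v + 1 > 0" by (simp add: add_nonneg_pos)
      have "\<tau> > 0" using \<delta>(1) den by (simp add: \<tau>_def)
      moreover have "infdist (x + s *\<^sub>R v) F \<le> \<epsilon> * s" if s: "0 < s" "s < \<tau>" for s
      proof -
        define g where "g = (\<lambda>\<sigma>. infdist (x + \<sigma> *\<^sub>R v) F)"
        have "g s \<le> g 0 + \<epsilon> * (s - 0)"
        proof (rule dini_mono[where L = "\<epsilon>/2"])
          show "0 \<le> s" using s by simp
          show "continuous_on {0..s} g" unfolding g_def by (intro continuous_intros)
          show "\<epsilon>/2 < \<epsilon>" using eps by simp
          fix \<sigma> assume \<sigma>: "0 \<le> \<sigma>" "\<sigma> < s" "g \<sigma> \<le> g 0 + \<epsilon> * (\<sigma> - 0)"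
          define z where "z = x + \<sigma> *\<^sub>R v"
          obtain p where p: "p \<in> F" "infdist z F = dist z p" using infdist_attains_inf[OF Fc FNE] by blast
          have "dist z p \<le> dist z x" using p infdist_le[OF xF, of z] by simp
          moreover have "dist z x = \<sigma> * norm v" using \<sigma> by (simp add: z_def dist_norm)
          ultimately have "dist p x \<le> 2 * (\<sigma> * norm v)" using dist_triangle[of p x z] by (simp add: dist_commute)
          also have "\<dots> \<le> \<sigma> * (2 * norm v + 1)" using \<sigma> by (simp add: algebra_simps)
          also have "\<dots> < \<tau> * (2 * norm v + 1)" using \<sigma> s den by (intro mult_strict_right_mono) auto
          also have "\<dots> = \<delta>" using den by (simp add: \<tau>_def)
          finally have px: "dist p x < \<delta>" .
          show "\<forall>\<eta>>0. \<exists>h. 0<h \<and> h<\<eta> \<and> \<sigma>+h \<le> s \<and> g (\<sigma>+h) \<le> g \<sigma> + \<epsilon>/2 * h"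
          proof (intro allI impI)
            fix \<eta> :: real assume "\<eta> > 0"
            then have "min \<eta> (s - \<sigma>) > 0" using \<sigma> by simp
            then obtain h u where hu: "0<h" "h < min \<eta> (s - \<sigma>)" "dist u v < \<epsilon>/2" "p + h *\<^sub>R u \<in> F"
              using \<delta>(2) p(1) px by blast
            have "g (\<sigma>+h) \<le> dist (x + (\<sigma>+h) *\<^sub>R v) (p + h *\<^sub>R u)" unfolding g_def by (rule infdist_le[OF hu(4)])
            also have "\<dots> \<le> dist z p + h * dist v u"
            proof -
              have "x + (\<sigma>+h) *\<^sub>R v - (p + h *\<^sub>R u) = (z - p) + h *\<^sub>R (v - u)" by (simp add: z_def algebra_simps)
              then have "dist (x + (\<sigma>+h) *\<^sub>R v) (p + h *\<^sub>R u) = norm ((z - p) + h *\<^sub>R (v - u))" by (simp only: dist_norm)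
              moreover have "norm ((z - p) + h *\<^sub>R (v - u)) \<le> norm (z - p) + norm (h *\<^sub>R (v - u))" by (rule norm_triangle_ineq)
              moreover have "norm (h *\<^sub>R (v - u)) = h * dist v u" using hu(1) by (simp add: dist_norm)
              moreover have "dist z p = norm (z - p)" by (simp add: dist_norm)
              ultimately show ?thesis by linarith
            qed
            also have "\<dots> \<le> g \<sigma> + \<epsilon>/2 * h"
            proof -
              have "h * dist v u \<le> h * (\<epsilon>/2)" using hu(1,3) by (intro mult_left_mono) (auto simp: dist_commute)
              then show ?thesis using p(2) by (simp add: g_def z_def mult.commute)
            qed
            finally show "\<exists>h. 0<h \<and> h<\<eta> \<and> \<sigma>+h \<le> s \<and> g (\<sigma>+h) \<le> g \<sigma> + \<epsilon>/2 * h"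
              using hu(1,2) by (intro exI[of _ h]) auto
          qed
        qed
        moreover have "g 0 = 0" using xF by (simp add: g_def)
        ultimately show ?thesis by (simp add: g_def)
      qed
      ultimately show ?thesis by blast
    qed
    show "v \<in> adjacent_cone (frontier K) x" unfolding adjacent_cone_def mem_Collect_eq
    proof (intro allI impI)
      fix t :: "nat \<Rightarrow> real" assume t: "(\<forall>i. 0 < t i) \<and> t \<longlonglongrightarrow> 0"
      have "\<forall>i. \<exists>p. p \<in> F \<and> infdist (x + t i *\<^sub>R v) F = dist (x + t i *\<^sub>R v) p"
        using infdist_attains_inf[OF Fc FNE] by metis
      then obtain P where P: "\<And>i. P i \<in> F \<and> infdist (x + t i *\<^sub>R v) F = dist (x + t i *\<^sub>R v) (P i)" by metis
      define w where "w = (\<lambda>i. (1 / t i) *\<^sub>R (P i - x))"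
      have tpos: "t i > 0" for i using t by blast
      have xw: "x + t i *\<^sub>R w i = P i" for i using tpos[of i] by (simp add: w_def)
      have dw: "dist (w i) v = infdist (x + t i *\<^sub>R v) F / t i" for i
      proof -
        have "w i - v = (1 / t i) *\<^sub>R (P i - (x + t i *\<^sub>R v))" using tpos[of i] by (simp add: w_def algebra_simps)
        then have "dist (w i) v = (1 / t i) * dist (P i) (x + t i *\<^sub>R v)" using tpos[of i] by (simp add: dist_norm)
        then show ?thesis using P[of i] by (simp add: dist_commute)
      qed
      have "w \<longlonglongrightarrow> v" unfolding lim_sequentially
      proof (intro allI impI)
        fix r :: real assume "r > 0"
        then have "r/2 > 0" by simp
        then obtain \<tau> where \<tau>: "\<tau> > 0" "\<forall>s. 0 < s \<and> s < \<tau> \<longrightarrow> infdist (x + s *\<^sub>R v) F \<le> r/2 * s"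
          using est by blast
        obtain N where N: "\<forall>n\<ge>N. dist (t n) 0 < \<tau>" using t \<tau>(1) unfolding lim_sequentially by blast
        have "dist (w n) v < r" if "n \<ge> N" for n
        proof -
          have "\<bar>t n\<bar> < \<tau>" using N that by (simp add: dist_real_def)
          then have "t n < \<tau>" by linarith
          then have "infdist (x + t n *\<^sub>R v) F \<le> r/2 * t n" using \<tau>(2) t by blast
          then have "infdist (x + t n *\<^sub>R v) F / t n \<le> r/2" using tpos[of n] by (simp add: divide_le_eq)
          moreover have "r/2 < r" using \<open>r>0\<close> by simp
          ultimately show ?thesis using dw[of n] by linarith
        qed
        then show "\<exists>no. \<forall>n\<ge>no. dist (w n) v < r" by blast
      qed
      moreover have "\<forall>i. x + t i *\<^sub>R w i \<in> frontier K" using xw P by (simp add: F_def)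
      ultimately show "\<exists>w. w \<longlonglongrightarrow> v \<and> (\<forall>i. x + t i *\<^sub>R w i \<in> frontier K)" by blast
    qed
  qed
qed


theorem proposition1:
  fixes K C P :: "'a::euclidean_space set" and F :: "'a \<Rightarrow> 'a set"
  assumes "closed K" and "closed C"
    and "P \<subseteq> frontier K \<inter> frontier C"
    and "property_Pr K C P"
    and "\<forall>x. usc_at UNIV F x \<and> lsc_at UNIV F x"
    and "\<forall>x\<in>frontier K \<inter> interior C. F x \<subseteq> contingent_cone K x"
  shows "\<forall>x\<in>P. F x \<subseteq> contingent_cone K x \<and>
           adjacent_cone (frontier K) x = contingent_cone (frontier K) x"
proof (intro ballI conjI)
  fix x assume xP: "x \<in> P"
  have usc: "usc_at (frontier K) (contingent_cone K) x"
    and lsc: "lsc_at (frontier K) (contingent_cone K) x"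
    and Nprop: "\<forall>N. open N \<and> x \<in> N \<longrightarrow> N \<inter> frontier K \<inter> interior C \<noteq> {}"
    using assms(4) xP unfolding property_Pr_def by blast+
  have xf: "x \<in> frontier K" using assms(3) xP by blast
  show "adjacent_cone (frontier K) x = contingent_cone (frontier K) x"
    by (rule adj_eq[OF assms(1) xf usc lsc])
  show "F x \<subseteq> contingent_cone K x"
  proof
    fix v assume v: "v \<in> F x"
    define Tx where "Tx = contingent_cone K x"
    have "v \<in> closure Tx" unfolding closure_approachable
    proof (intro allI impI)
      fix \<epsilon> :: real assume "\<epsilon> > 0"
      obtain e1 where e1: "e1 > 0" "\<forall>y\<in>frontier K. dist y x < e1 \<longrightarrow> contingent_cone K y \<subseteq> Tx"
        using usc_sub[OF usc] unfolding Tx_def by blast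
      have "open (ball v \<epsilon>)" "F x \<inter> ball v \<epsilon> \<noteq> {}" using v \<open>\<epsilon>>0\<close> by auto
      then obtain e2 where e2: "e2 > 0" "\<forall>y\<in>UNIV. dist y x < e2 \<longrightarrow> F y \<inter> ball v \<epsilon> \<noteq> {}"
        using assms(5) unfolding lsc_at_def by blast
      have "open (ball x (min e1 e2)) \<and> x \<in> ball x (min e1 e2)" using e1(1) e2(1) by simp
      then have "ball x (min e1 e2) \<inter> frontier K \<inter> interior C \<noteq> {}" using Nprop by blast
      then obtain y where y: "y \<in> ball x (min e1 e2)" "y \<in> frontier K" "y \<in> interior C" by blast
      have dy: "dist y x < e1" "dist y x < e2" using y(1) by (auto simp: dist_commute)
      have "F y \<subseteq> contingent_cone K y" using assms(6) y(2,3) by blast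
      also have "\<dots> \<subseteq> Tx" using e1(2) y(2) dy(1) by blast
      finally have FyT: "F y \<subseteq> Tx" .
      obtain c where c: "c \<in> F y" "c \<in> ball v \<epsilon>" using e2(2) dy(2) by blast
      then show "\<exists>c\<in>Tx. dist c v < \<epsilon>" using FyT by (auto simp: dist_commute)
    qed
    then show "v \<in> contingent_cone K x" using cc_closed closure_closed unfolding Tx_def by metis
  qed
qed

end
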